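(* Let $S\subset\mathbb{Z}^d$ be finite and even, and let $\{\mathcal{S}_u\}_{u\in\partial_\bullet S}$ be subsets of $\mathcal{S}$. Let $\mathcal{F}\subset\mathcal{S}^S$ be such that $f(u)\in\mathcal{S}_u$ for every $f\in\mathcal{F}$ and $u\in\partial_\bullet S$. Let $f$ be a random element of $\mathcal{F}$ chosen with probability proportional to $\omega_f$. For each odd vertex $v\in S$, let $X_v$ be a random variable measurable with respect to $f|_{N(v)}$. Then \[ \omega(\mathcal{F})\le\prod_{v\in S\text{ odd}}\ \prod_x\left[\frac{Z(\Psi_{v,x},I_{v,x})}{\mathbb{P}(X_v=x)}\right]^{\frac{1}{2d}\mathbb{P}(X_v=x)}\cdot\prod_{u\in\partial_\bullet S}(\lambda_{\mathcal{S}_u})^{\frac{1}{2d}|\partial u\cap\partial S|}, \] where the inner product is over $x$ in the support of $X_v$, and $\Psi_{v,x}$ and $I_{v,x}$ are the supports of $f|_{N(v)}$ and of $f(v)$, respectively, on the event $\{X_v=x\}$.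
   Context: A spin system: finite set $\mathcal{S}$, activities $\lambda_i>0$, symmetric pair interactions $\lambda_{i,j}\ge0$. For $f:S\to\mathcal{S}$, $\omega_f=\prod_{v\in S}\lambda_{f(v)}\prod_{\{u,v\}\in E(S)}\lambda_{f(u),f(v)}$ where $E(S)$ is the set of nearest-neighbour edges of $\mathbb{Z}^d$ with both endpoints in $S$; $\omega(\mathcal{F})=\sum_{f\in\mathcal{F}}\omega_f$; $\lambda_I=\sum_{i\in I}\lambda_i$. A vertex is even/odd according to the parity of its coordinate sum. $N(v)$ is the set of $2d$ neighbours of $v$; $\partial_\bullet S$ is the set of vertices of $S$ with a neighbour outside $S$; $S$ is even if $\partial_\bullet S$ consists of even vertices (so $N(v)\subset S$ for odd $v\in S$). $\partial u$ is the set of edges incident to $u$ and $\partial S$ the set of edges with exactly one endpoint in $S$. For a set $\Psi$ of functions $\psi:N(v)\to\mathcal{S}$ and $I\subset\mathcal{S}$, $Z(\Psi,I)=\sum_{\psi\in\Psi}\big(\prod_{u\in N(v)}\lambda_{\psi(u)}\big)\big(\sum_{i\in I}\lambda_i\prod_{u\in N(v)}\lambda_{i,\psi(u)}\big)^{2d}$. *)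

theory Defs
  imports "HOL-Analysis.Analysis"
begin

(* Vertices of Z^d are modelled as int ^ 'd, with d = CARD('d).
  Spins form a finite type 's.  Configurations on S are extensional functions
  (elements of S ->E UNIV). *)

type_synonym 'd vertex = "int ^ 'd"

definition nbrs :: "'d::finite vertex \<Rightarrow> 'd vertex set" where
  "nbrs v = {w. \<exists>i. w = v + axis i 1 \<or> w = v - axis i 1}"

definition adj :: "'d::finite vertex \<Rightarrow> 'd vertex \<Rightarrow> bool" where
  "adj u v \<longleftrightarrow> v \<in> nbrs u"

definition even_vertex :: "'d::finite vertex \<Rightarrow> bool" where
  "even_vertex v \<longleftrightarrow> even (\<Sum>i\<in>UNIV. v $ i)"

definition odd_vertex :: "'d::finite vertex \<Rightarrow> bool" where
  "odd_vertex v \<longleftrightarrow> odd (\<Sum>i\<in>UNIV. v $ i)"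

definition edges_in :: "'d::finite vertex set \<Rightarrow> 'd vertex set set" where
  "edges_in S = {{u, v} | u v. u \<in> S \<and> v \<in> S \<and> adj u v}"

definition inner_boundary :: "'d::finite vertex set \<Rightarrow> 'd vertex set" where
  "inner_boundary S = {v \<in> S. \<exists>w \<in> nbrs v. w \<notin> S}"

definition even_set :: "'d::finite vertex set \<Rightarrow> bool" where
  "even_set S \<longleftrightarrow> (\<forall>v \<in> inner_boundary S. even_vertex v)"

definition incident_edges :: "'d::finite vertex \<Rightarrow> 'd vertex set set" where
  "incident_edges u = {{u, w} | w. adj u w}"

definition edge_boundary :: "'d::finite vertex set \<Rightarrow> 'd vertex set set" where
  "edge_boundary S = {{u, w} | u w. adj u w \<and> u \<in> S \<and> w \<notin> S}"

definition spin_system :: "('s::finite \<Rightarrow> real) \<Rightarrow> ('s \<Rightarrow> 's \<Rightarrow> real) \<Rightarrow> bool" where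
  "spin_system lam lam2 \<longleftrightarrow> (\<forall>i. lam i > 0) \<and> (\<forall>i j. lam2 i j \<ge> 0)
      \<and> (\<forall>i j. lam2 i j = lam2 j i)"

(* Interaction weight of an (unordered) edge; well defined by symmetry of lam2. *)
definition edge_weight ::
  "('s \<Rightarrow> 's \<Rightarrow> real) \<Rightarrow> ('v \<Rightarrow> 's) \<Rightarrow> 'v set \<Rightarrow> real" where
  "edge_weight lam2 f e = (let p = (SOME p. e = {fst p, snd p}) in lam2 (f (fst p)) (f (snd p)))"

definition weight ::
  "('s \<Rightarrow> real) \<Rightarrow> ('s \<Rightarrow> 's \<Rightarrow> real) \<Rightarrow> 'd::finite vertex set \<Rightarrow> ('d vertex \<Rightarrow> 's) \<Rightarrow> real" where
  "weight lam lam2 S f = (\<Prod>v\<in>S. lam (f v)) * (\<Prod>e\<in>edges_in S. edge_weight lam2 f e)"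

definition total_weight ::
  "('s \<Rightarrow> real) \<Rightarrow> ('s \<Rightarrow> 's \<Rightarrow> real) \<Rightarrow> 'd::finite vertex set \<Rightarrow> ('d vertex \<Rightarrow> 's) set \<Rightarrow> real" where
  "total_weight lam lam2 S F = (\<Sum>f\<in>F. weight lam lam2 S f)"

definition lam_set :: "('s \<Rightarrow> real) \<Rightarrow> 's set \<Rightarrow> real" where
  "lam_set lam I = (\<Sum>i\<in>I. lam i)"

definition Zfun ::
  "('s \<Rightarrow> real) \<Rightarrow> ('s \<Rightarrow> 's \<Rightarrow> real) \<Rightarrow> 'd::finite vertex \<Rightarrow> ('d vertex \<Rightarrow> 's) set \<Rightarrow> 's set \<Rightarrow> real" where
  "Zfun lam lam2 v Psi I =
     (\<Sum>\<psi>\<in>Psi. (\<Prod>u\<in>nbrs v. lam (\<psi> u)) *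
        (\<Sum>i\<in>I. lam i * (\<Prod>u\<in>nbrs v. lam2 i (\<psi> u))) ^ (2 * CARD('d)))"

definition prob_X ::
  "('s \<Rightarrow> real) \<Rightarrow> ('s \<Rightarrow> 's \<Rightarrow> real) \<Rightarrow> 'd::finite vertex set \<Rightarrow> ('d vertex \<Rightarrow> 's) set
    \<Rightarrow> (('d vertex \<Rightarrow> 's) \<Rightarrow> 'x) \<Rightarrow> 'x \<Rightarrow> real" where
  "prob_X lam lam2 S F X x =
     (\<Sum>f\<in>{f\<in>F. X f = x}. weight lam lam2 S f) / total_weight lam lam2 S F"

definition supp_X ::
  "('s \<Rightarrow> real) \<Rightarrow> ('s \<Rightarrow> 's \<Rightarrow> real) \<Rightarrow> 'd::finite vertex set \<Rightarrow> ('d vertex \<Rightarrow> 's) set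
    \<Rightarrow> (('d vertex \<Rightarrow> 's) \<Rightarrow> 'x) \<Rightarrow> 'x set" where
  "supp_X lam lam2 S F X = {x. prob_X lam lam2 S F X x > 0}"

definition Psi_set ::
  "('s \<Rightarrow> real) \<Rightarrow> ('s \<Rightarrow> 's \<Rightarrow> real) \<Rightarrow> 'd::finite vertex set \<Rightarrow> ('d vertex \<Rightarrow> 's) set
    \<Rightarrow> (('d vertex \<Rightarrow> 's) \<Rightarrow> 'x) \<Rightarrow> 'd vertex \<Rightarrow> 'x \<Rightarrow> ('d vertex \<Rightarrow> 's) set" where
  "Psi_set lam lam2 S F X v x =
     {restrict f (nbrs v) | f. f \<in> F \<and> weight lam lam2 S f > 0 \<and> X f = x}"

definition I_set ::
  "('s \<Rightarrow> real) \<Rightarrow> ('s \<Rightarrow> 's \<Rightarrow> real) \<Rightarrow> 'd::finite vertex set \<Rightarrow> ('d vertex \<Rightarrow> 's) set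
    \<Rightarrow> (('d vertex \<Rightarrow> 's) \<Rightarrow> 'x) \<Rightarrow> 'd vertex \<Rightarrow> 'x \<Rightarrow> 's set" where
  "I_set lam lam2 S F X v x =
     {f v | f. f \<in> F \<and> weight lam lam2 S f > 0 \<and> X f = x}"

end

theory Submission
  imports Defs
begin


locale fprob =
  fixes Om :: "'w set" and p :: "'w \<Rightarrow> real"
  assumes fin: "finite Om" and pos: "\<And>w. w \<in> Om \<Longrightarrow> p w > 0" and tot: "sum p Om = 1"
begin

definition P :: "('w \<Rightarrow> 'b) \<Rightarrow> 'b \<Rightarrow> real" where
  "P g y = sum p {w\<in>Om. g w = y}"


lemma P_pos: "w \<in> Om \<Longrightarrow> P g (g w) > 0"
proof -
  assume w: "w \<in> Om"
  have "p w \<le> P g (g w)" unfolding P_def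
    by (rule member_le_sum) (use w fin pos in \<open>auto intro: less_imp_le\<close>)
  with pos[OF w] show ?thesis by simp
qed

lemma P_pos': "y \<in> g ` Om \<Longrightarrow> P g y > 0"
  using P_pos by auto

lemma class_sum:
  assumes B: "B \<subseteq> Om" and cl: "\<And>w w'. w \<in> B \<Longrightarrow> w' \<in> Om \<Longrightarrow> g w' = g w \<Longrightarrow> w' \<in> B"
  shows "(\<Sum>w\<in>B. p w * \<phi> (g w) / P g (g w)) = (\<Sum>y\<in>g ` B. \<phi> y)"
proof -
  have fB: "finite B" using B fin finite_subset by blast
  have "(\<Sum>w\<in>B. p w * \<phi> (g w) / P g (g w)) =
        (\<Sum>y\<in>g ` B. \<Sum>w\<in>{w\<in>B. g w = y}. p w * \<phi> (g w) / P g (g w))"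
    by (rule sum.image_gen[OF fB])
  also have "\<dots> = (\<Sum>y\<in>g ` B. \<phi> y)"
  proof (rule sum.cong[OF refl])
    fix y assume y: "y \<in> g ` B"
    from y obtain w0 where w0: "w0 \<in> B" "y = g w0" by auto
    have eq: "{w\<in>B. g w = y} = {w\<in>Om. g w = y}"
      using B cl[OF w0(1)] w0(2) by blast
    have Ppos: "P g y > 0" using P_pos[of w0 g] B w0 by auto
    have "(\<Sum>w\<in>{w\<in>B. g w = y}. p w * \<phi> (g w) / P g (g w))
        = (\<Sum>w\<in>{w\<in>Om. g w = y}. p w * (\<phi> y / P g y))"
      unfolding eq by (rule sum.cong) auto
    also have "\<dots> = (\<Sum>w\<in>{w\<in>Om. g w = y}. p w) * (\<phi> y / P g y)"
      by (rule sum_distrib_right[symmetric])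
    also have "\<dots> = P g y * (\<phi> y / P g y)" by (simp only: P_def)
    also have "\<dots> = \<phi> y" using Ppos by simp
    finally show "(\<Sum>w\<in>{w\<in>B. g w = y}. p w * \<phi> (g w) / P g (g w)) = \<phi> y" .
  qed
  finally show ?thesis .
qed

lemma sum_P: "(\<Sum>y\<in>g ` Om. P g y) = 1"
proof -
  have "(\<Sum>y\<in>g ` Om. P g y) = (\<Sum>w\<in>Om. p w)"
    unfolding P_def by (rule sum.image_gen[OF fin, symmetric])
  then show ?thesis using tot by simp
qed

lemma E_fun: "(\<Sum>w\<in>Om. p w * \<phi> (g w)) = (\<Sum>y\<in>g ` Om. P g y * \<phi> y)"
proof -
  have "(\<Sum>w\<in>Om. p w * \<phi> (g w)) = (\<Sum>y\<in>g ` Om. \<Sum>w\<in>{w\<in>Om. g w = y}. p w * \<phi> (g w))"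
    by (rule sum.image_gen[OF fin])
  also have "\<dots> = (\<Sum>y\<in>g ` Om. P g y * \<phi> y)"
    unfolding P_def by (rule sum.cong[OF refl]) (simp add: sum_distrib_right)
  finally show ?thesis .
qed

lemma cond_gibbs:
  assumes det: "\<And>w w'. w \<in> Om \<Longrightarrow> w' \<in> Om \<Longrightarrow> g w = g w' \<Longrightarrow> c w = c w'"
    and qpos: "\<And>w. w \<in> Om \<Longrightarrow> q (g w) > 0"
  shows "(\<Sum>w\<in>Om. p w * ln (P c (c w) * q (g w) / P g (g w)))
     \<le> (\<Sum>w\<in>Om. p w * ln (\<Sum>y\<in>g ` {w'\<in>Om. c w' = c w}. q y))"
proof -
  define Q where "Q z = (\<Sum>y\<in>g ` {w'\<in>Om. c w' = z}. q y)" for z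
  have Qpos: "Q (c w) > 0" if w: "w \<in> Om" for w
    unfolding Q_def
  proof (rule sum_pos2)
    show "finite (g ` {w' \<in> Om. c w' = c w})" using fin by auto
    show "g w \<in> g ` {w' \<in> Om. c w' = c w}" using w by auto
    show "0 < q (g w)" using qpos w by auto
    show "\<And>i. i \<in> g ` {w' \<in> Om. c w' = c w} \<Longrightarrow> 0 \<le> q i" using qpos by fastforce
  qed
  define x where "x w = P c (c w) * q (g w) / (P g (g w) * Q (c w))" for w
  have xpos: "x w > 0" if "w \<in> Om" for w
    unfolding x_def using P_pos[OF that, of g] P_pos[OF that, of c] qpos[OF that] Qpos[OF that] by (intro divide_pos_pos mult_pos_pos) auto
  have spl: "ln (P c (c w) * q (g w) / P g (g w)) = ln (x w) + ln (Q (c w))" if w: "w \<in> Om" for w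
  proof -
    have "P c (c w) * q (g w) / P g (g w) = x w * Q (c w)"
      unfolding x_def using Qpos[OF w] by simp
    then show ?thesis using xpos[OF w] Qpos[OF w] by (simp add: ln_mult)
  qed
  have sumx: "(\<Sum>w\<in>Om. p w * x w) = 1"
  proof -
    have "(\<Sum>w\<in>Om. p w * x w) = (\<Sum>z\<in>c ` Om. \<Sum>w\<in>{w\<in>Om. c w = z}. p w * x w)"
      by (rule sum.image_gen[OF fin])
    also have "\<dots> = (\<Sum>z\<in>c ` Om. P c z)"
    proof (rule sum.cong[OF refl])
      fix z assume z: "z \<in> c ` Om"
      let ?B = "{w\<in>Om. c w = z}"
      have "(\<Sum>w\<in>?B. p w * x w) = (\<Sum>w\<in>?B. (P c z / Q z) * (p w * q (g w) / P g (g w)))"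
        unfolding x_def by (rule sum.cong) (auto simp: mult_ac)
      also have "\<dots> = (P c z / Q z) * (\<Sum>w\<in>?B. p w * q (g w) / P g (g w))"
        by (simp add: sum_distrib_left)
      also have "(\<Sum>w\<in>?B. p w * q (g w) / P g (g w)) = (\<Sum>y\<in>g ` ?B. q y)"
      proof (rule class_sum)
        show "?B \<subseteq> Om" by auto
        fix w w' assume "w \<in> ?B" "w' \<in> Om" "g w' = g w"
        then show "w' \<in> ?B" using det[of w' w] by auto
      qed
      also have "(\<Sum>y\<in>g ` ?B. q y) = Q z" unfolding Q_def ..
      also have "P c z / Q z * Q z = P c z"
      proof -
        from z obtain w where "w \<in> Om" "z = c w" by auto
        then have "Q z > 0" using Qpos by auto
        then show ?thesis by simp
      qed
      finally show "(\<Sum>w\<in>?B. p w * x w) = P c z" .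
    qed
    also have "\<dots> = 1" by (rule sum_P)
    finally show ?thesis .
  qed
  have "(\<Sum>w\<in>Om. p w * ln (P c (c w) * q (g w) / P g (g w)))
      = (\<Sum>w\<in>Om. p w * ln (x w)) + (\<Sum>w\<in>Om. p w * ln (Q (c w)))"
    unfolding sum.distrib[symmetric] by (rule sum.cong) (simp_all add: spl distrib_left)
  also have "(\<Sum>w\<in>Om. p w * ln (x w)) \<le> (\<Sum>w\<in>Om. p w * (x w - 1))"
  proof (rule sum_mono)
    fix w assume w: "w \<in> Om"
    show "p w * ln (x w) \<le> p w * (x w - 1)"
      using pos[OF w] ln_le_minus_one[OF xpos[OF w]] by (simp add: mult_left_mono)
  qed
  also have "\<dots> = 0" using sumx tot by (simp add: right_diff_distrib sum_subtractf)
  finally show ?thesis unfolding Q_def by simp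
qed

definition H :: "('w \<Rightarrow> 'b) \<Rightarrow> real" where
  "H g = - (\<Sum>w\<in>Om. p w * ln (P g (g w)))"

lemma P_cong:
  assumes "\<And>w w'. w \<in> Om \<Longrightarrow> w' \<in> Om \<Longrightarrow> (g w = g w') = (g' w = g' w')" and "w \<in> Om"
  shows "P g (g w) = P g' (g' w)"
proof -
  have "{w'\<in>Om. g w' = g w} = {w'\<in>Om. g' w' = g' w}"
  proof (intro Collect_cong conj_cong refl)
    fix w' assume "w' \<in> Om" then show "(g w' = g w) = (g' w' = g' w)" using assms by auto
  qed
  then show ?thesis unfolding P_def by simp
qed

lemma H_cong:
  assumes "\<And>w w'. w \<in> Om \<Longrightarrow> w' \<in> Om \<Longrightarrow> (g w = g w') = (g' w = g' w')"
  shows "H g = H g'"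
proof -
  have "\<And>w. w \<in> Om \<Longrightarrow> P g (g w) = P g' (g' w)" by (rule P_cong[OF assms])
  then show ?thesis by (simp add: H_def)
qed

lemma submod:
  fixes a :: "'w \<Rightarrow> 'a" and b :: "'w \<Rightarrow> 'b" and k :: "'w \<Rightarrow> 'c"
  shows "H (\<lambda>w. (a w, b w, k w)) + H k \<le> H (\<lambda>w. (a w, k w)) + H (\<lambda>w. (b w, k w))"
proof -
  define G where "G = (\<lambda>w. (a w, b w, k w))"
  define A where "A = (\<lambda>w. (a w, k w))"
  define B where "B = (\<lambda>w. (b w, k w))"
  define q where "q = (\<lambda>(x::'a, y::'b, z::'c). P B (y, z) / P k z)"
  have qG: "q (G w) = P B (B w) / P k (k w)" for w unfolding q_def G_def B_def by simp
  have qpos: "q (G w) > 0" if "w \<in> Om" for w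
    unfolding qG using P_pos[OF that, of B] P_pos[OF that, of k] by simp
  have cg: "(\<Sum>w\<in>Om. p w * ln (P A (A w) * q (G w) / P G (G w)))
     \<le> (\<Sum>w\<in>Om. p w * ln (\<Sum>y\<in>G ` {w'\<in>Om. A w' = A w}. q y))"
    by (rule cond_gibbs[where g=G and c=A and q=q, OF _ qpos]) (auto simp: G_def A_def)
  have Qle: "(\<Sum>y\<in>G ` {w'\<in>Om. A w' = A w}. q y) \<le> 1" if w: "w \<in> Om" for w
  proof -
    let ?T = "{w'\<in>Om. A w' = A w}"
    let ?U = "{w'\<in>Om. k w' = k w}"
    have inj: "inj_on snd (G ` ?T)" by (rule inj_onI) (auto simp: G_def A_def)
    have "(\<Sum>y\<in>G ` ?T. q y) = (\<Sum>y\<in>G ` ?T. P B (snd y) / P k (k w))"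
      by (rule sum.cong) (auto simp: G_def A_def q_def)
    also have "\<dots> = (\<Sum>y\<in>snd ` G ` ?T. P B y / P k (k w))"
      by (simp add: sum.reindex[OF inj])
    also have "\<dots> \<le> (\<Sum>y\<in>B ` ?U. P B y / P k (k w))"
    proof (rule sum_mono2)
      show "finite (B ` ?U)" using fin by auto
      show "snd ` G ` ?T \<subseteq> B ` ?U" by (auto simp: G_def A_def B_def image_iff)
      show "\<And>y. y \<in> B ` ?U - snd ` G ` ?T \<Longrightarrow> 0 \<le> P B y / P k (k w)"
        using P_pos[of _ B] P_pos[OF w, of k] by (fastforce intro!: divide_nonneg_pos less_imp_le)
    qed
    also have "\<dots> = (\<Sum>y\<in>B ` ?U. P B y) / P k (k w)" by (simp add: sum_divide_distrib)
    also have "(\<Sum>y\<in>B ` ?U. P B y) = (\<Sum>w'\<in>?U. p w' * P B (B w') / P B (B w'))"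
    proof (rule class_sum[symmetric])
      show "?U \<subseteq> Om" by auto
      fix w1 w' assume "w1 \<in> ?U" "w' \<in> Om" "B w' = B w1"
      then show "w' \<in> ?U" by (auto simp: B_def)
    qed
    also have "\<dots> = (\<Sum>w'\<in>?U. p w')"
      by (rule sum.cong) (use P_pos[of _ B] in force)+
    also have "\<dots> = P k (k w)" by (simp add: P_def)
    also have "P k (k w) / P k (k w) = 1" using P_pos[OF w, of k] by simp
    finally show ?thesis .
  qed
  have "(\<Sum>w\<in>Om. p w * ln (\<Sum>y\<in>G ` {w'\<in>Om. A w' = A w}. q y)) \<le> 0"
  proof (rule sum_nonpos)
    fix w assume w: "w \<in> Om"
    have "(\<Sum>y\<in>G ` {w'\<in>Om. A w' = A w}. q y) > 0"
    proof (rule sum_pos2)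
      show "finite (G ` {w' \<in> Om. A w' = A w})" using fin by auto
      show "G w \<in> G ` {w' \<in> Om. A w' = A w}" using w by auto
      show "0 < q (G w)" using qpos w by auto
      show "\<And>i. i \<in> G ` {w' \<in> Om. A w' = A w} \<Longrightarrow> 0 \<le> q i" using qpos by fastforce
    qed
    then have "ln (\<Sum>y\<in>G ` {w'\<in>Om. A w' = A w}. q y) \<le> 0" using Qle[OF w] by simp
    then show "p w * ln (\<Sum>y\<in>G ` {w'\<in>Om. A w' = A w}. q y) \<le> 0"
      using pos[OF w] by (simp add: mult_nonneg_nonpos less_imp_le)
  qed
  with cg have le0: "(\<Sum>w\<in>Om. p w * ln (P A (A w) * q (G w) / P G (G w))) \<le> 0" by linarith
  have expand: "p w * ln (P A (A w) * q (G w) / P G (G w)) =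
      p w * ln (P A (A w)) + p w * ln (P B (B w)) - p w * ln (P k (k w)) - p w * ln (P G (G w))"
    if w: "w \<in> Om" for w
    using P_pos[OF w, of A] P_pos[OF w, of B] P_pos[OF w, of k] P_pos[OF w, of G]
    by (simp add: qG ln_mult ln_div algebra_simps)
  have "(\<Sum>w\<in>Om. p w * ln (P A (A w) * q (G w) / P G (G w))) = H G + H k - H A - H B"
    unfolding H_def by (simp add: expand sum.distrib sum_subtractf cong: sum.cong)
  with le0 show ?thesis unfolding G_def A_def B_def by linarith
qed

end
lemma shearer:
  fixes h :: "'a set \<Rightarrow> real" and A :: "'i \<Rightarrow> 'a set" and c :: "'i \<Rightarrow> real"
  assumes V0: "finite V0" and J: "finite J" and h0: "h {} = 0"
    and sub: "\<And>X Y. X \<subseteq> V0 \<Longrightarrow> Y \<subseteq> V0 \<Longrightarrow> h (X \<union> Y) + h (X \<inter> Y) \<le> h X + h Y"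
    and cpos: "\<And>i. i \<in> J \<Longrightarrow> c i \<ge> 0"
    and V: "V \<subseteq> V0" and AV: "\<forall>i\<in>J. A i \<subseteq> V"
    and cov: "\<forall>x\<in>V. (\<Sum>i\<in>{i\<in>J. x \<in> A i}. c i) = 1"
  shows "h V \<le> (\<Sum>i\<in>J. c i * h (A i))"
proof -
  have "finite V" using V V0 finite_subset by blast
  then show ?thesis using V AV cov
  proof (induction V arbitrary: A rule: finite_induct)
    case empty
    then have "\<forall>i\<in>J. A i = {}" by auto
    then show ?case using h0 by simp
  next
    case (insert x V')
    define A' where "A' i = A i - {x}" for i
    have IH: "h V' \<le> (\<Sum>i\<in>J. c i * h (A' i))"
    proof (rule insert.IH)
      show "V' \<subseteq> V0" using insert.prems by auto
      show "\<forall>i\<in>J. A' i \<subseteq> V'" using insert.prems unfolding A'_def by auto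
      show "\<forall>y\<in>V'. (\<Sum>i\<in>{i\<in>J. y \<in> A' i}. c i) = 1"
      proof
        fix y assume y: "y \<in> V'"
        then have "y \<noteq> x" using insert.hyps by auto
        then have "{i\<in>J. y \<in> A' i} = {i\<in>J. y \<in> A i}" unfolding A'_def by auto
        then show "(\<Sum>i\<in>{i\<in>J. y \<in> A' i}. c i) = 1" using insert.prems y by auto
      qed
    qed
    define D where "D = h (insert x V') - h V'"
    have each: "c i * h (A i) \<ge> c i * h (A' i) + (if x \<in> A i then c i else 0) * D" if i: "i \<in> J" for i
    proof (cases "x \<in> A i")
      case True
      have Ai: "A i \<subseteq> insert x V'" using insert.prems i by auto
      have u: "A i \<union> V' = insert x V'" using Ai True by auto
      have n: "A i \<inter> V' = A' i" unfolding A'_def using insert.hyps Ai by auto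
      have "h (A i \<union> V') + h (A i \<inter> V') \<le> h (A i) + h V'"
        by (rule sub) (use Ai insert.prems in auto)
      then have "h (A' i) + D \<le> h (A i)" unfolding u n D_def by linarith
      then have "c i * (h (A' i) + D) \<le> c i * h (A i)" using cpos[OF i] by (rule mult_left_mono)
      then show ?thesis using True by (simp add: algebra_simps)
    next
      case False
      then show ?thesis unfolding A'_def by simp
    qed
    have "(\<Sum>i\<in>J. c i * h (A' i)) + (\<Sum>i\<in>J. (if x \<in> A i then c i else 0)) * D
        \<le> (\<Sum>i\<in>J. c i * h (A i))"
      unfolding sum_distrib_right sum.distrib[symmetric] by (rule sum_mono) (use each in auto)
    moreover have "(\<Sum>i\<in>J. (if x \<in> A i then c i else 0)) = (\<Sum>i\<in>{i\<in>J. x \<in> A i}. c i)"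
      using J by (simp add: sum.inter_filter)
    moreover have "(\<Sum>i\<in>{i\<in>J. x \<in> A i}. c i) = 1" using insert.prems by auto
    ultimately have "(\<Sum>i\<in>J. c i * h (A' i)) + D \<le> (\<Sum>i\<in>J. c i * h (A i))" by simp
    then show ?case using IH unfolding D_def by linarith
  qed
qed

lemma chain:
  fixes h :: "'a set \<Rightarrow> real"
  assumes sub: "\<And>X Y. h (X \<union> Y) + h (X \<inter> Y) \<le> h X + h Y"
    and B: "finite B" and NB: "\<forall>v\<in>B. N v \<subseteq> A \<and> v \<notin> A"
  shows "h (A \<union> B) \<le> h A + (\<Sum>v\<in>B. h (insert v (N v)) - h (N v))"
  using B NB
proof (induction B rule: finite_induct)
  case empty
  then show ?case by simp
next
  case (insert v B)
  have Nv: "N v \<subseteq> A" "v \<notin> A" using insert.prems by auto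
  have u: "(A \<union> B) \<union> insert v (N v) = A \<union> insert v B" using Nv by auto
  have n: "(A \<union> B) \<inter> insert v (N v) = N v" using Nv insert.hyps by auto
  have "h ((A \<union> B) \<union> insert v (N v)) + h ((A \<union> B) \<inter> insert v (N v)) \<le> h (A \<union> B) + h (insert v (N v))"
    by (rule sub)
  then have "h (A \<union> insert v B) \<le> h (A \<union> B) + (h (insert v (N v)) - h (N v))" unfolding u n by linarith
  moreover have "h (A \<union> B) \<le> h A + (\<Sum>v\<in>B. h (insert v (N v)) - h (N v))"
    using insert.IH insert.prems by auto
  ultimately show ?case using insert.hyps by simp
qed




lemma csum_plus: "(\<Sum>i\<in>UNIV. (v + axis j 1) $ i) = (\<Sum>i\<in>UNIV. v $ i) + (1::int)"
  by (simp add: axis_def sum.distrib)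

lemma csum_minus: "(\<Sum>i\<in>UNIV. (v - axis j 1) $ i) = (\<Sum>i\<in>UNIV. v $ i) - (1::int)"
  by (simp add: axis_def sum_subtractf)

lemma nbrs_eq: "nbrs v = range (\<lambda>i. v + axis i 1) \<union> range (\<lambda>i. v - axis i 1)"
  by (auto simp: nbrs_def)

lemma finite_nbrs[simp]: "finite (nbrs v)"
  by (simp add: nbrs_eq)

lemma card_nbrs: "card (nbrs (v::'d::finite vertex)) = 2 * CARD('d)"
proof -
  have i1: "inj (\<lambda>i. v + axis i (1::int))"
  proof (rule injI)
    fix i j assume "v + axis i (1::int) = v + axis j 1"
    then have "axis i (1::int) = axis j 1" by simp
    then show "i = j" by (simp add: axis_eq_axis)
  qed
  have i2: "inj (\<lambda>i. v - axis i (1::int))"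
  proof (rule injI)
    fix i j assume "v - axis i (1::int) = v - axis j 1"
    then have "axis i (1::int) = axis j 1" by simp
    then show "i = j" by (simp add: axis_eq_axis)
  qed
  have d: "range (\<lambda>i. v + axis i (1::int)) \<inter> range (\<lambda>i. v - axis i 1) = {}"
  proof (rule ccontr)
    assume "\<not> ?thesis"
    then obtain i j where "v + axis i (1::int) = v - axis j 1" by auto
    then have "(v + axis i (1::int)) $ i = (v - axis j 1) $ i" by simp
    then show False by (auto simp: axis_def split: if_splits)
  qed
  show ?thesis unfolding nbrs_eq
    by (subst card_Un_disjoint) (use d i1 i2 in \<open>auto simp: card_image\<close>)
qed

lemma nbrs_sym1: "u \<in> nbrs v \<Longrightarrow> v \<in> nbrs u"
proof -
  assume "u \<in> nbrs v"
  then obtain i where "u = v + axis i 1 \<or> u = v - axis i 1" unfolding nbrs_def by auto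
  then have "v = u - axis i 1 \<or> v = u + axis i 1" by auto
  then show "v \<in> nbrs u" unfolding nbrs_def by auto
qed

lemma nbrs_sym: "u \<in> nbrs v \<longleftrightarrow> v \<in> nbrs u"
  using nbrs_sym1 by blast

lemma nbrs_parity: "u \<in> nbrs v \<Longrightarrow> odd_vertex u \<longleftrightarrow> \<not> odd_vertex v"
proof -
  assume "u \<in> nbrs v"
  then obtain i where "u = v + axis i 1 \<or> u = v - axis i 1" unfolding nbrs_def by auto
  then have "(\<Sum>j\<in>UNIV. u $ j) = (\<Sum>j\<in>UNIV. v $ j) + 1 \<or> (\<Sum>j\<in>UNIV. u $ j) = (\<Sum>j\<in>UNIV. v $ j) - 1"
    using csum_plus csum_minus by metis
  moreover have "\<And>a b::int. a = b + 1 \<or> a = b - 1 \<Longrightarrow> odd a = (\<not> odd b)" by presburger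
  ultimately show ?thesis unfolding odd_vertex_def by blast
qed

lemma even_odd_vertex: "even_vertex v \<longleftrightarrow> \<not> odd_vertex v"
  unfolding even_vertex_def odd_vertex_def by simp

lemma not_self_nbr: "v \<notin> nbrs v"
  using nbrs_parity by blast

lemma odd_nbrs_in:
  assumes "even_set S" "v \<in> S" "odd_vertex v"
  shows "nbrs v \<subseteq> S"
  using assms unfolding even_set_def inner_boundary_def by (auto simp: even_odd_vertex)

lemma edge_weight_pair:
  assumes sym: "\<And>i j. lam2 i j = lam2 j i"
  shows "edge_weight lam2 f {a, b} = lam2 (f a) (f b)"
proof -
  define q where "q = (SOME q. {a, b} = {fst q, snd q})"
  have "{a, b} = {fst q, snd q}" unfolding q_def by (rule someI[where x="(a,b)"]) simp
  then have "(fst q = a \<and> snd q = b) \<or> (fst q = b \<and> snd q = a)" by (auto simp: doubleton_eq_iff)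
  then show ?thesis unfolding edge_weight_def q_def[symmetric] Let_def using sym by auto
qed

lemma edges_in_eq:
  assumes "even_set S"
  shows "edges_in S = (\<lambda>(v,u). {v,u}) ` (SIGMA v:{v\<in>S. odd_vertex v}. nbrs v)"
proof
  show "edges_in S \<subseteq> (\<lambda>(v,u). {v,u}) ` (SIGMA v:{v\<in>S. odd_vertex v}. nbrs v)"
  proof
    fix e assume "e \<in> edges_in S"
    then obtain u v where e: "e = {u, v}" "u \<in> S" "v \<in> S" "v \<in> nbrs u"
      unfolding edges_in_def adj_def by auto
    show "e \<in> (\<lambda>(v,u). {v,u}) ` (SIGMA v:{v\<in>S. odd_vertex v}. nbrs v)"
    proof (cases "odd_vertex u")
      case True
      then show ?thesis using e by (auto intro!: image_eqI[where x="(u,v)"])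
    next
      case False
      then have "odd_vertex v" using nbrs_parity[OF e(4)] by simp
      moreover have "u \<in> nbrs v" using e(4) nbrs_sym by auto
      ultimately show ?thesis using e by (auto intro!: image_eqI[where x="(v,u)"])
    qed
  qed
next
  show "(\<lambda>(v,u). {v,u}) ` (SIGMA v:{v\<in>S. odd_vertex v}. nbrs v) \<subseteq> edges_in S"
  proof
    fix e assume "e \<in> (\<lambda>(v,u). {v,u}) ` (SIGMA v:{v\<in>S. odd_vertex v}. nbrs v)"
    then obtain v u where vu: "e = {v,u}" "v \<in> S" "odd_vertex v" "u \<in> nbrs v" by auto
    then have "u \<in> S" using odd_nbrs_in[OF assms] by auto
    then show "e \<in> edges_in S" unfolding edges_in_def adj_def using vu by blast
  qed
qed

lemma edges_inj:
  "inj_on (\<lambda>(v,u). {v,u}) (SIGMA v:{v\<in>S. odd_vertex v}. nbrs v)"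
proof (rule inj_onI, clarsimp)
  fix v u v' u'
  assume a: "v \<in> S" "odd_vertex v" "u \<in> nbrs v" "v' \<in> S" "odd_vertex v'" "u' \<in> nbrs v'"
    "{v, u} = {v', u'}"
  have "\<not> odd_vertex u" "\<not> odd_vertex u'" using a nbrs_parity by blast+
  then show "v = v' \<and> u = u'" using a(2,5,7) by (auto simp: doubleton_eq_iff)
qed

lemma bd_edges:
  assumes "u \<in> S"
  shows "incident_edges u \<inter> edge_boundary S = (\<lambda>w. {u, w}) ` (nbrs u - S)"
proof
  show "incident_edges u \<inter> edge_boundary S \<subseteq> (\<lambda>w. {u, w}) ` (nbrs u - S)"
  proof
    fix e assume e: "e \<in> incident_edges u \<inter> edge_boundary S"
    then obtain w where w: "e = {u, w}" "w \<in> nbrs u" unfolding incident_edges_def adj_def by auto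
    from e obtain a b where ab: "e = {a, b}" "a \<in> S" "b \<notin> S" unfolding edge_boundary_def by auto
    have "w = b" using w(1) ab assms by (auto simp: doubleton_eq_iff)
    then show "e \<in> (\<lambda>w. {u, w}) ` (nbrs u - S)" using w ab by auto
  qed
  show "(\<lambda>w. {u, w}) ` (nbrs u - S) \<subseteq> incident_edges u \<inter> edge_boundary S"
    using assms unfolding incident_edges_def edge_boundary_def adj_def by blast
qed

lemma card_bd_edges:
  assumes "u \<in> S"
  shows "card (incident_edges u \<inter> edge_boundary S) = card (nbrs u - S)"
  unfolding bd_edges[OF assms]
  by (rule card_image) (auto simp: inj_on_def doubleton_eq_iff)

lemma cover_count:
  assumes "u \<in> S" "\<not> odd_vertex u"
  shows "{v\<in>{v\<in>S. odd_vertex v}. u \<in> nbrs v} = nbrs u \<inter> S"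
proof
  show "{v\<in>{v\<in>S. odd_vertex v}. u \<in> nbrs v} \<subseteq> nbrs u \<inter> S" using nbrs_sym by blast
  show "nbrs u \<inter> S \<subseteq> {v\<in>{v\<in>S. odd_vertex v}. u \<in> nbrs v}"
  proof
    fix v assume v: "v \<in> nbrs u \<inter> S"
    then have "odd_vertex v" using nbrs_parity[of v u] assms(2) by auto
    then show "v \<in> {v\<in>{v\<in>S. odd_vertex v}. u \<in> nbrs v}" using v nbrs_sym by auto
  qed
qed




lemma restrict_eq_iff: "restrict f A = restrict g A \<longleftrightarrow> (\<forall>x\<in>A. f x = g x)"
  by (auto simp: fun_eq_iff restrict_def)

context fprob begin

lemma H_const: "H (\<lambda>w. c) = 0"
proof -
  have "P (\<lambda>w. c) c = 1" unfolding P_def using tot by simp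
  then show ?thesis unfolding H_def by simp
qed

lemma submod_restrict:
  fixes G :: "'w \<Rightarrow> 'a \<Rightarrow> 'b"
  shows "H (\<lambda>w. restrict (G w) (X \<union> Y)) + H (\<lambda>w. restrict (G w) (X \<inter> Y))
     \<le> H (\<lambda>w. restrict (G w) X) + H (\<lambda>w. restrict (G w) Y)"
proof -
  let ?a = "\<lambda>w. restrict (G w) (X - Y)"
  let ?b = "\<lambda>w. restrict (G w) (Y - X)"
  let ?k = "\<lambda>w. restrict (G w) (X \<inter> Y)"
  have "H (\<lambda>w. (?a w, ?b w, ?k w)) + H ?k \<le> H (\<lambda>w. (?a w, ?k w)) + H (\<lambda>w. (?b w, ?k w))"
    by (rule submod)
  moreover have "H (\<lambda>w. (?a w, ?b w, ?k w)) = H (\<lambda>w. restrict (G w) (X \<union> Y))"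
    by (rule H_cong) (auto simp: restrict_eq_iff)
  moreover have "H (\<lambda>w. (?a w, ?k w)) = H (\<lambda>w. restrict (G w) X)"
    by (rule H_cong) (auto simp: restrict_eq_iff)
  moreover have "H (\<lambda>w. (?b w, ?k w)) = H (\<lambda>w. restrict (G w) Y)"
    by (rule H_cong) (auto simp: restrict_eq_iff)
  ultimately show ?thesis by simp
qed

end

locale sys =
  fixes lam :: "'s::finite \<Rightarrow> real" and lam2 :: "'s \<Rightarrow> 's \<Rightarrow> real"
    and S :: "'d::finite vertex set"
    and Su :: "'d vertex \<Rightarrow> 's set"
    and F :: "('d vertex \<Rightarrow> 's) set"
    and X :: "'d vertex \<Rightarrow> ('d vertex \<Rightarrow> 's) \<Rightarrow> 'x"
  assumes ss: "spin_system lam lam2"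
    and finS: "finite S" and evS: "even_set S"
    and FS: "F \<subseteq> S \<rightarrow>\<^sub>E (UNIV :: 's set)"
    and FSu: "\<forall>f\<in>F. \<forall>u\<in>inner_boundary S. f u \<in> Su u"
    and Xloc: "\<forall>v\<in>S. odd_vertex v \<longrightarrow>
           (\<forall>f g. (\<forall>u\<in>nbrs v. f u = g u) \<longrightarrow> X v f = X v g)"
    and Zpos: "total_weight lam lam2 S F > 0"
begin

abbreviation "W \<equiv> weight lam lam2 S"
abbreviation "Z \<equiv> total_weight lam lam2 S F"
definition "Om = {f\<in>F. W f > 0}"
definition "pp f = W f / Z"
definition "Od = {v\<in>S. odd_vertex v}"
definition "Ev = {v\<in>S. \<not> odd_vertex v}"
definition "wv v f = lam (f v) * (\<Prod>u\<in>nbrs v. lam2 (f v) (f u))"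

lemma lam_pos: "lam i > 0" using ss unfolding spin_system_def by auto
lemma lam2_nn: "lam2 i j \<ge> 0" using ss unfolding spin_system_def by auto
lemma lam2_sym: "lam2 i j = lam2 j i" using ss unfolding spin_system_def by auto

lemma finF: "finite F"
  using FS finite_PiE[OF finS, of "\<lambda>_. UNIV :: 's set"] finite_subset by auto

lemma ew_nn: "edge_weight lam2 f e \<ge> 0"
  unfolding edge_weight_def Let_def using lam2_nn by simp

lemma W_nn: "W f \<ge> 0"
  unfolding weight_def using lam_pos ew_nn
  by (intro mult_nonneg_nonneg prod_nonneg) (auto intro: less_imp_le)

lemma Z_Om: "Z = (\<Sum>f\<in>Om. W f)"
  unfolding total_weight_def Om_def
proof (rule sum.mono_neutral_right[OF finF])
  show "{f \<in> F. 0 < W f} \<subseteq> F" by auto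
  show "\<forall>i\<in>F - {f \<in> F. 0 < W f}. W i = 0"
  proof
    fix i assume "i \<in> F - {f \<in> F. 0 < W f}"
    then have "\<not> W i > 0" by auto
    with W_nn[of i] show "W i = 0" by linarith
  qed
qed

lemma finOm: "finite Om" using finF unfolding Om_def by auto

lemma fprob_inst: "fprob Om pp"
proof
  show "finite Om" by (rule finOm)
  show "\<And>w. w \<in> Om \<Longrightarrow> 0 < pp w" unfolding pp_def Om_def using Zpos by auto
  show "sum pp Om = 1" unfolding pp_def using Zpos by (simp add: sum_divide_distrib[symmetric] Z_Om[symmetric])
qed

sublocale fp: fprob Om pp by (rule fprob_inst)

lemma S_split: "S = Ev \<union> Od" "Ev \<inter> Od = {}" unfolding Ev_def Od_def by auto

lemma finEv: "finite Ev" and finOd: "finite Od" using finS unfolding Ev_def Od_def by auto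

lemma nbrs_Ev: "v \<in> Od \<Longrightarrow> nbrs v \<subseteq> Ev"
  using odd_nbrs_in[OF evS] nbrs_parity unfolding Od_def Ev_def by blast

lemma weight_decomp: "W f = (\<Prod>u\<in>Ev. lam (f u)) * (\<Prod>v\<in>Od. wv v f)"
proof -
  have "(\<Prod>v\<in>Ev \<union> Od. lam (f v)) = (\<Prod>u\<in>Ev. lam (f u)) * (\<Prod>v\<in>Od. lam (f v))"
    by (rule prod.union_disjoint) (use finEv finOd S_split(2) in auto)
  then have "(\<Prod>v\<in>S. lam (f v)) = (\<Prod>u\<in>Ev. lam (f u)) * (\<Prod>v\<in>Od. lam (f v))"
    by (simp only: S_split(1)[symmetric])
  moreover have "(\<Prod>e\<in>edges_in S. edge_weight lam2 f e) = (\<Prod>v\<in>Od. \<Prod>u\<in>nbrs v. lam2 (f v) (f u))"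
  proof -
    have "(\<Prod>e\<in>edges_in S. edge_weight lam2 f e)
        = (\<Prod>e\<in>(\<lambda>(v,u). {v,u}) ` (SIGMA v:Od. nbrs v). edge_weight lam2 f e)"
      unfolding edges_in_eq[OF evS] Od_def ..
    also have "\<dots> = (\<Prod>(v,u)\<in>(SIGMA v:Od. nbrs v). edge_weight lam2 f {v,u})"
      by (subst prod.reindex) (use edges_inj[of S] in \<open>auto simp: Od_def case_prod_beta comp_def\<close>)
    also have "\<dots> = (\<Prod>(v,u)\<in>(SIGMA v:Od. nbrs v). lam2 (f v) (f u))"
      by (rule prod.cong) (auto simp: edge_weight_pair[OF lam2_sym])
    also have "\<dots> = (\<Prod>v\<in>Od. \<Prod>u\<in>nbrs v. lam2 (f v) (f u))"
      by (rule prod.Sigma[symmetric]) (use finOd in auto)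
    finally show ?thesis .
  qed
  moreover have "(\<Prod>v\<in>Od. wv v f) = (\<Prod>v\<in>Od. lam (f v)) * (\<Prod>v\<in>Od. \<Prod>u\<in>nbrs v. lam2 (f v) (f u))"
    unfolding wv_def by (rule prod.distrib)
  ultimately show ?thesis unfolding weight_def by (simp only: mult.assoc)
qed

lemma wv_nn: "wv v f \<ge> 0"
  unfolding wv_def using lam_pos lam2_nn by (intro mult_nonneg_nonneg prod_nonneg) (auto intro: less_imp_le)

lemma wv_pos: assumes "f \<in> Om" "v \<in> Od" shows "wv v f > 0"
proof -
  have "W f > 0" using assms unfolding Om_def by auto
  then have "(\<Prod>v\<in>Od. wv v f) \<noteq> 0" unfolding weight_decomp by auto
  then have "wv v f \<noteq> 0" using assms(2) finOd by (auto simp: prod_zero_iff)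
  then show ?thesis using wv_nn[of v f] by simp
qed

lemma ln_W: assumes "f \<in> Om"
  shows "ln (W f) = (\<Sum>u\<in>Ev. ln (lam (f u))) + (\<Sum>v\<in>Od. ln (wv v f))"
proof -
  have a: "(\<Prod>u\<in>Ev. lam (f u)) > 0" using lam_pos by (simp add: prod_pos)
  have b: "(\<Prod>v\<in>Od. wv v f) > 0" using wv_pos[OF assms] by (simp add: prod_pos)
  have "ln (W f) = ln (\<Prod>u\<in>Ev. lam (f u)) + ln (\<Prod>v\<in>Od. wv v f)"
    unfolding weight_decomp using a b by (simp add: ln_mult)
  also have "\<dots> = (\<Sum>u\<in>Ev. ln (lam (f u))) + (\<Sum>v\<in>Od. ln (wv v f))"
  proof -
    have "ln (\<Prod>u\<in>Ev. lam (f u)) = (\<Sum>u\<in>Ev. ln (lam (f u)))"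
      by (rule ln_prod[OF finEv]) (use lam_pos in \<open>metis less_irrefl\<close>)
    moreover have "ln (\<Prod>v\<in>Od. wv v f) = (\<Sum>v\<in>Od. ln (wv v f))"
      by (rule ln_prod[OF finOd]) (use wv_pos[OF assms] in \<open>metis less_irrefl\<close>)
    ultimately show ?thesis by simp
  qed
  finally show ?thesis .
qed

end



context sys begin

definition "h A = fp.H (\<lambda>f. restrict f A)"
definition "mf A = (\<Sum>f\<in>Om. pp f * (\<Sum>u\<in>A. ln (lam (f u))))"
definition "hp A = h A + mf A"
definition "DD = 2 * real CARD('d)"
definition "bnd u = real (card (incident_edges u \<inter> edge_boundary S))"
abbreviation "Bd \<equiv> inner_boundary S"

lemma DD_pos: "DD > 0" unfolding DD_def by simp

lemma hsub: "h (A \<union> B) + h (A \<inter> B) \<le> h A + h B"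
  unfolding h_def by (rule fp.submod_restrict[of "\<lambda>w. w"])

lemma h_empty: "h {} = 0"
proof -
  have "(\<lambda>f. restrict f {}) = (\<lambda>f::'d vertex \<Rightarrow> 's. (\<lambda>x. undefined))"
    by (simp add: restrict_def fun_eq_iff)
  then show ?thesis unfolding h_def by (simp add: fp.H_const)
qed

lemma hp_empty: "hp {} = 0" unfolding hp_def mf_def by (simp add: h_empty)

lemma mf_mod: assumes "finite A" "finite B" shows "mf (A \<union> B) + mf (A \<inter> B) = mf A + mf B"
proof -
  have "\<And>f. (\<Sum>u\<in>A \<union> B. ln (lam (f u))) + (\<Sum>u\<in>A \<inter> B. ln (lam (f u)))
        = (\<Sum>u\<in>A. ln (lam (f u))) + (\<Sum>u\<in>B. ln (lam (f u)))"
    by (rule sum.union_inter[OF assms])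
  then show ?thesis unfolding mf_def
    by (simp add: sum.distrib[symmetric] distrib_left[symmetric])
qed

lemma hpsub: assumes "finite A" "finite B" shows "hp (A \<union> B) + hp (A \<inter> B) \<le> hp A + hp B"
  using hsub[of A B] mf_mod[OF assms] unfolding hp_def by linarith

lemma chain_app: "h S \<le> h Ev + (\<Sum>v\<in>Od. h (insert v (nbrs v)) - h (nbrs v))"
proof -
  have "h (Ev \<union> Od) \<le> h Ev + (\<Sum>v\<in>Od. h (insert v (nbrs v)) - h (nbrs v))"
  proof (rule chain)
    show "\<And>X Y. h (X \<union> Y) + h (X \<inter> Y) \<le> h X + h Y" by (rule hsub)
    show "finite Od" by (rule finOd)
    show "\<forall>v\<in>Od. nbrs v \<subseteq> Ev \<and> v \<notin> Ev" using nbrs_Ev unfolding Od_def Ev_def by auto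
  qed
  then show ?thesis by (simp only: S_split(1)[symmetric])
qed

lemma Bd_even: "u \<in> Bd \<Longrightarrow> u \<in> Ev"
  using evS unfolding even_set_def Ev_def inner_boundary_def by (auto simp: even_odd_vertex)

lemma bnd_eq: "u \<in> S \<Longrightarrow> bnd u = real (card (nbrs u - S))"
  unfolding bnd_def by (simp add: card_bd_edges)

lemma bnd_nn: "bnd u \<ge> 0" unfolding bnd_def by simp

lemma shearer_app:
  "hp Ev \<le> (\<Sum>v\<in>Od. (1 / DD) * hp (nbrs v)) + (\<Sum>u\<in>Bd. (bnd u / DD) * hp {u})"
proof -
  define J where "J = Od \<union> Bd"
  define Af where "Af i = (if odd_vertex i then nbrs i else {i})" for i :: "'d vertex"
  define c where "c i = (if odd_vertex i then 1 / DD else bnd i / DD)" for i :: "'d vertex"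
  have disj: "Od \<inter> Bd = {}" using Bd_even S_split(2) by auto
  have finBd: "finite Bd" using finS unfolding inner_boundary_def by auto
  have OdOdd: "\<And>v. v \<in> Od \<Longrightarrow> odd_vertex v" unfolding Od_def by auto
  have BdEv: "\<And>v. v \<in> Bd \<Longrightarrow> \<not> odd_vertex v" using Bd_even unfolding Ev_def by auto
  have "hp Ev \<le> (\<Sum>i\<in>J. c i * hp (Af i))"
  proof (rule shearer[where V0=Ev])
    show "finite Ev" by (rule finEv)
    show "finite J" unfolding J_def using finOd finBd by auto
    show "hp {} = 0" by (rule hp_empty)
    show "\<And>X Y. X \<subseteq> Ev \<Longrightarrow> Y \<subseteq> Ev \<Longrightarrow> hp (X \<union> Y) + hp (X \<inter> Y) \<le> hp X + hp Y"
      using hpsub finEv finite_subset by metis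
    show "\<And>i. i \<in> J \<Longrightarrow> 0 \<le> c i" unfolding c_def using DD_pos bnd_nn by auto
    show "Ev \<subseteq> Ev" by simp
    show "\<forall>i\<in>J. Af i \<subseteq> Ev"
      unfolding J_def Af_def using nbrs_Ev OdOdd BdEv Bd_even by auto
    show "\<forall>x\<in>Ev. (\<Sum>i\<in>{i\<in>J. x \<in> Af i}. c i) = 1"
    proof
      fix x assume x: "x \<in> Ev"
      then have xS: "x \<in> S" and xe: "\<not> odd_vertex x" unfolding Ev_def by auto
      have split: "{i\<in>J. x \<in> Af i} = {v\<in>Od. x \<in> nbrs v} \<union> (Bd \<inter> {x})"
        unfolding J_def Af_def using OdOdd BdEv by auto
      have d2: "{v\<in>Od. x \<in> nbrs v} \<inter> (Bd \<inter> {x}) = {}" using disj by auto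
      have cnt: "{v\<in>Od. x \<in> nbrs v} = nbrs x \<inter> S"
        unfolding Od_def by (rule cover_count[OF xS xe])
      have s1: "(\<Sum>i\<in>{v\<in>Od. x \<in> nbrs v}. c i) = real (card (nbrs x \<inter> S)) / DD"
        unfolding c_def using OdOdd by (simp add: cnt[symmetric])
      have s2: "(\<Sum>i\<in>Bd \<inter> {x}. c i) = real (card (nbrs x - S)) / DD"
      proof (cases "x \<in> Bd")
        case True
        then have "Bd \<inter> {x} = {x}" by auto
        then show ?thesis unfolding c_def using xe bnd_eq[OF xS] by simp
      next
        case False
        then have "nbrs x - S = {}" using xS unfolding inner_boundary_def by auto
        then show ?thesis using False by simp
      qed
      have "(\<Sum>i\<in>{i\<in>J. x \<in> Af i}. c i) = (\<Sum>i\<in>{v\<in>Od. x \<in> nbrs v}. c i) + (\<Sum>i\<in>Bd \<inter> {x}. c i)"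
        unfolding split by (rule sum.union_disjoint) (use finOd d2 in auto)
      also have "\<dots> = (real (card (nbrs x \<inter> S)) + real (card (nbrs x - S))) / DD"
        unfolding s1 s2 by (simp add: add_divide_distrib)
      also have "real (card (nbrs x \<inter> S)) + real (card (nbrs x - S)) = real (card (nbrs x))"
        using card_Int_Diff[OF finite_nbrs, of x S] by simp
      also have "\<dots> = DD" unfolding DD_def card_nbrs by simp
      finally show "(\<Sum>i\<in>{i\<in>J. x \<in> Af i}. c i) = 1" using DD_pos by simp
    qed
  qed
  also have "(\<Sum>i\<in>J. c i * hp (Af i)) = (\<Sum>i\<in>Od. c i * hp (Af i)) + (\<Sum>i\<in>Bd. c i * hp (Af i))"
    unfolding J_def by (rule sum.union_disjoint) (use finOd finBd disj in auto)
  also have "(\<Sum>i\<in>Od. c i * hp (Af i)) = (\<Sum>v\<in>Od. (1 / DD) * hp (nbrs v))"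
    by (rule sum.cong) (auto simp: c_def Af_def OdOdd)
  also have "(\<Sum>i\<in>Bd. c i * hp (Af i)) = (\<Sum>u\<in>Bd. (bnd u / DD) * hp {u})"
    by (rule sum.cong) (auto simp: c_def Af_def BdEv)
  finally show ?thesis .
qed

end



context sys begin

lemma Om_F: "Om \<subseteq> F" unfolding Om_def by auto

lemma Om_ne: "Om \<noteq> {}"
  using Zpos Z_Om by auto

lemma pp_pos: "f \<in> Om \<Longrightarrow> pp f > 0" by (rule fp.pos)

lemma W_pos: "f \<in> Om \<Longrightarrow> W f > 0" unfolding Om_def by auto

lemma h_S: "h S = ln Z - (\<Sum>f\<in>Om. pp f * ln (W f))"
proof -
  have P1: "fp.P (\<lambda>f. restrict f S) (restrict f S) = pp f" if f: "f \<in> Om" for f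
  proof -
    have "{g\<in>Om. restrict g S = restrict f S} = {f}"
    proof
      show "{g\<in>Om. restrict g S = restrict f S} \<subseteq> {f}"
      proof
        fix g assume g: "g \<in> {g\<in>Om. restrict g S = restrict f S}"
        have "restrict g S = g" using g Om_F FS by (intro PiE_restrict) auto
        moreover have "restrict f S = f" using f Om_F FS by (intro PiE_restrict) auto
        ultimately show "g \<in> {f}" using g by auto
      qed
      show "{f} \<subseteq> {g\<in>Om. restrict g S = restrict f S}" using f by auto
    qed
    then show ?thesis unfolding fp.P_def by simp
  qed
  have "h S = - (\<Sum>f\<in>Om. pp f * ln (pp f))"
    unfolding h_def fp.H_def by (simp add: P1 cong: sum.cong)
  also have "\<dots> = - (\<Sum>f\<in>Om. pp f * ln (W f) - pp f * ln Z)"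
  proof -
    have "\<And>f. f \<in> Om \<Longrightarrow> ln (pp f) = ln (W f) - ln Z"
      unfolding pp_def using W_pos Zpos by (simp add: ln_divide_pos)
    then show ?thesis by (simp add: right_diff_distrib cong: sum.cong)
  qed
  also have "\<dots> = ln Z * (\<Sum>f\<in>Om. pp f) - (\<Sum>f\<in>Om. pp f * ln (W f))"
    by (simp add: sum_subtractf sum_distrib_left mult.commute)
  also have "\<dots> = ln Z - (\<Sum>f\<in>Om. pp f * ln (W f))" using fp.tot by simp
  finally show ?thesis .
qed

lemma Eln_W: "(\<Sum>f\<in>Om. pp f * ln (W f)) = mf Ev + (\<Sum>v\<in>Od. \<Sum>f\<in>Om. pp f * ln (wv v f))"
proof -
  have "(\<Sum>f\<in>Om. pp f * ln (W f)) = (\<Sum>f\<in>Om. pp f * (\<Sum>u\<in>Ev. ln (lam (f u))) + (\<Sum>v\<in>Od. pp f * ln (wv v f)))"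
    by (rule sum.cong) (simp_all add: ln_W distrib_left sum_distrib_left)
  also have "\<dots> = mf Ev + (\<Sum>f\<in>Om. \<Sum>v\<in>Od. pp f * ln (wv v f))"
    unfolding mf_def by (rule sum.distrib)
  also have "(\<Sum>f\<in>Om. \<Sum>v\<in>Od. pp f * ln (wv v f)) = (\<Sum>v\<in>Od. \<Sum>f\<in>Om. pp f * ln (wv v f))"
    by (rule sum.swap)
  finally show ?thesis .
qed

lemma lam_set_pos: assumes "u \<in> Bd" shows "lam_set lam (Su u) > 0"
proof -
  obtain f where f: "f \<in> Om" using Om_ne by auto
  then have "f u \<in> Su u" using FSu Om_F assms by auto
  then show ?thesis unfolding lam_set_def
    by (intro sum_pos2[where i="f u"]) (auto intro: less_imp_le lam_pos)
qed

lemma boundary: assumes u: "u \<in> Bd" shows "hp {u} \<le> ln (lam_set lam (Su u))"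
proof -
  let ?g = "\<lambda>f::'d vertex \<Rightarrow> 's. f u"
  let ?c = "\<lambda>f::'d vertex \<Rightarrow> 's. ()"
  have hu: "h {u} = fp.H ?g"
    unfolding h_def by (rule fp.H_cong) (auto simp: restrict_eq_iff)
  have Pc: "fp.P ?c () = 1" unfolding fp.P_def using fp.tot by simp
  have cg: "(\<Sum>f\<in>Om. pp f * ln (fp.P ?c (?c f) * lam (?g f) / fp.P ?g (?g f)))
      \<le> (\<Sum>f\<in>Om. pp f * ln (\<Sum>y\<in>?g ` {f'\<in>Om. ?c f' = ?c f}. lam y))"
    by (rule fp.cond_gibbs) (auto intro: lam_pos)
  have lhs: "(\<Sum>f\<in>Om. pp f * ln (fp.P ?c (?c f) * lam (?g f) / fp.P ?g (?g f))) = hp {u}"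
  proof -
    have "\<And>f. f \<in> Om \<Longrightarrow> pp f * ln (fp.P ?c (?c f) * lam (?g f) / fp.P ?g (?g f))
          = pp f * ln (lam (f u)) - pp f * ln (fp.P ?g (?g f))"
      using fp.P_pos[of _ ?g] lam_pos Pc by (simp add: ln_divide_pos right_diff_distrib)
    then have "(\<Sum>f\<in>Om. pp f * ln (fp.P ?c (?c f) * lam (?g f) / fp.P ?g (?g f)))
        = (\<Sum>f\<in>Om. pp f * ln (lam (f u))) - (\<Sum>f\<in>Om. pp f * ln (fp.P ?g (?g f)))"
      by (simp add: sum_subtractf cong: sum.cong)
    then show ?thesis unfolding hp_def mf_def hu fp.H_def by simp
  qed
  have set_eq: "{f'\<in>Om. ?c f' = ?c f} = Om" for f by simp
  have S1: "(\<Sum>y\<in>?g ` Om. lam y) \<le> lam_set lam (Su u)"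
    unfolding lam_set_def
    by (rule sum_mono2) (use FSu Om_F u in \<open>auto intro: less_imp_le lam_pos\<close>)
  have S0: "(\<Sum>y\<in>?g ` Om. lam y) > 0"
  proof -
    obtain f where "f \<in> Om" using Om_ne by auto
    then show ?thesis by (intro sum_pos2[where i="f u"]) (auto intro: less_imp_le lam_pos simp: finOm)
  qed
  have "(\<Sum>f\<in>Om. pp f * ln (\<Sum>y\<in>?g ` {f'\<in>Om. ?c f' = ?c f}. lam y))
      = (\<Sum>f\<in>Om. pp f) * ln (\<Sum>y\<in>?g ` Om. lam y)"
    by (simp add: sum_distrib_right)
  also have "\<dots> = ln (\<Sum>y\<in>?g ` Om. lam y)" using fp.tot by simp
  also have "\<dots> \<le> ln (lam_set lam (Su u))" using S0 S1 by simp
  finally show ?thesis using cg lhs by linarith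
qed

lemma prob_eq: "prob_X lam lam2 S F Y x = fp.P Y x"
proof -
  have "(\<Sum>f\<in>{f\<in>F. Y f = x}. W f) = (\<Sum>f\<in>{f\<in>Om. Y f = x}. W f)"
  proof (rule sum.mono_neutral_right)
    show "finite {f\<in>F. Y f = x}" using finF by auto
    show "{f\<in>Om. Y f = x} \<subseteq> {f\<in>F. Y f = x}" using Om_F by auto
    show "\<forall>i\<in>{f\<in>F. Y f = x} - {f\<in>Om. Y f = x}. W i = 0"
    proof
      fix i assume "i \<in> {f\<in>F. Y f = x} - {f\<in>Om. Y f = x}"
      then have "\<not> W i > 0" unfolding Om_def by auto
      with W_nn[of i] show "W i = 0" by linarith
    qed
  qed
  then show ?thesis unfolding prob_X_def fp.P_def pp_def by (simp add: sum_divide_distrib)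
qed

lemma supp_eq: "supp_X lam lam2 S F Y = Y ` Om"
proof
  show "supp_X lam lam2 S F Y \<subseteq> Y ` Om"
  proof
    fix x assume "x \<in> supp_X lam lam2 S F Y"
    then have "fp.P Y x > 0" unfolding supp_X_def prob_eq by simp
    then have "{f\<in>Om. Y f = x} \<noteq> {}" unfolding fp.P_def by (metis less_irrefl sum.empty)
    then show "x \<in> Y ` Om" by auto
  qed
  show "Y ` Om \<subseteq> supp_X lam lam2 S F Y"
    unfolding supp_X_def prob_eq using fp.P_pos by auto
qed

end



context sys begin

definition "Zx v x = Zfun lam lam2 v (Psi_set lam lam2 S F (X v) v x) (I_set lam lam2 S F (X v) v x)"

lemma per_v:
  assumes v: "v \<in> Od"
  shows "(1 / DD) * hp (nbrs v) + (h (insert v (nbrs v)) - h (nbrs v)) + (\<Sum>f\<in>Om. pp f * ln (wv v f))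
    \<le> (1 / DD) * (\<Sum>x\<in>X v ` Om. fp.P (X v) x * (ln (Zx v x) - ln (fp.P (X v) x)))
     \<and> (\<forall>x\<in>X v ` Om. Zx v x > 0)"
proof -
  define N where "N = nbrs v"
  define psi where "psi = (\<lambda>f::'d vertex \<Rightarrow> 's. restrict f N)"
  define g where "g = (\<lambda>f::'d vertex \<Rightarrow> 's. restrict f (insert v N))"
  define Xv where "Xv = X v"
  define wr where "wr y = lam (y v) * (\<Prod>u\<in>N. lam2 (y v) (y u))" for y :: "'d vertex \<Rightarrow> 's"
  define Ix where "Ix x = I_set lam lam2 S F Xv v x" for x
  define Wv where "Wv y = (\<Sum>i\<in>Ix (Xv y). lam i * (\<Prod>u\<in>N. lam2 i (y u)))" for y :: "'d vertex \<Rightarrow> 's"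
  define lamN where "lamN y = (\<Prod>u\<in>N. lam (y u))" for y :: "'d vertex \<Rightarrow> 's"
  define qE where "qE y = lamN y * Wv y ^ (2 * CARD('d))" for y
  have vS: "v \<in> S" "odd_vertex v" using v unfolding Od_def by auto
  have XlocV: "\<And>f f'. (\<forall>u\<in>N. f u = f' u) \<Longrightarrow> Xv f = Xv f'"
    using Xloc vS unfolding Xv_def N_def by blast
  have Xpsi: "Xv (psi f) = Xv f" for f
    by (rule XlocV) (simp add: psi_def)
  have psi_app: "u \<in> N \<Longrightarrow> psi f u = f u" for f u by (simp add: psi_def)
  have wr_g: "wr (g f) = wv v f" for f
    unfolding wr_def wv_def g_def N_def by simp
  have wr_pos: "f \<in> Om \<Longrightarrow> wr (g f) > 0" for f using wv_pos[OF _ v] wr_g by simp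
  have wr_nn: "wr y \<ge> 0" for y
    unfolding wr_def using lam_pos lam2_nn by (intro mult_nonneg_nonneg prod_nonneg) (auto intro: less_imp_le)
  have stepD: "(\<Sum>f\<in>Om. pp f * ln (fp.P psi (psi f) * wr (g f) / fp.P g (g f)))
     \<le> (\<Sum>f\<in>Om. pp f * ln (\<Sum>y\<in>g ` {f'\<in>Om. psi f' = psi f}. wr y))"
  proof (rule fp.cond_gibbs)
    show "\<And>w w'. w \<in> Om \<Longrightarrow> w' \<in> Om \<Longrightarrow> g w = g w' \<Longrightarrow> psi w = psi w'"
      unfolding g_def psi_def by (auto simp: restrict_eq_iff)
    show "\<And>w. w \<in> Om \<Longrightarrow> 0 < wr (g w)" by (rule wr_pos)
  qed
  have Qd: "0 < (\<Sum>y\<in>g ` {f'\<in>Om. psi f' = psi f}. wr y) \<and>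
            (\<Sum>y\<in>g ` {f'\<in>Om. psi f' = psi f}. wr y) \<le> Wv (psi f)" if f: "f \<in> Om" for f
  proof
    let ?T = "g ` {f'\<in>Om. psi f' = psi f}"
    have finT: "finite ?T" using finOm by auto
    show "0 < (\<Sum>y\<in>?T. wr y)"
      by (rule sum_pos2[where i="g f"]) (use finT f wr_pos wr_nn in auto)
    define \<phi> where "\<phi> i = lam i * (\<Prod>u\<in>N. lam2 i (f u))" for i
    have Tchar: "\<And>y. y \<in> ?T \<Longrightarrow> \<exists>f'. f' \<in> Om \<and> (\<forall>u\<in>N. f' u = f u) \<and> y = g f'"
      unfolding psi_def by (auto simp: restrict_eq_iff)
    have "(\<Sum>y\<in>?T. wr y) = (\<Sum>y\<in>?T. \<phi> (y v))"
    proof (rule sum.cong[OF refl])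
      fix y assume "y \<in> ?T"
      then obtain f' where f': "f' \<in> Om" "\<forall>u\<in>N. f' u = f u" "y = g f'" using Tchar by blast
      show "wr y = \<phi> (y v)" unfolding wr_def \<phi>_def f'(3) g_def using f'(2)
        by (auto intro!: prod.cong)
    qed
    also have "\<dots> = (\<Sum>i\<in>(\<lambda>y. y v) ` ?T. \<phi> i)"
    proof (rule sum.reindex[symmetric, unfolded comp_def])
      show "inj_on (\<lambda>y. y v) ?T"
      proof (rule inj_onI)
        fix y1 y2 assume y1: "y1 \<in> ?T" and y2: "y2 \<in> ?T" and e: "y1 v = y2 v"
        obtain f1 where f1: "f1 \<in> Om" "\<forall>u\<in>N. f1 u = f u" "y1 = g f1" using Tchar[OF y1] by blast
        obtain f2 where f2: "f2 \<in> Om" "\<forall>u\<in>N. f2 u = f u" "y2 = g f2" using Tchar[OF y2] by blast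
        have "f1 v = f2 v" using e f1(3) f2(3) unfolding g_def by simp
        then show "y1 = y2" unfolding f1(3) f2(3) g_def using f1(2) f2(2)
          by (auto simp: restrict_eq_iff)
      qed
    qed
    also have "\<dots> \<le> (\<Sum>i\<in>Ix (Xv f). \<phi> i)"
    proof (rule sum_mono2)
      show "finite (Ix (Xv f))" by simp
      show "(\<lambda>y. y v) ` ?T \<subseteq> Ix (Xv f)"
      proof
        fix i assume "i \<in> (\<lambda>y. y v) ` ?T"
        then obtain y where y: "y \<in> ?T" "i = y v" by auto
        obtain f' where f': "f' \<in> Om" "\<forall>u\<in>N. f' u = f u" "y = g f'" using Tchar[OF y(1)] by blast
        have "Xv f' = Xv f" using XlocV f'(2) by auto
        moreover have "i = f' v" using y(2) f'(3) unfolding g_def by simp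
        ultimately show "i \<in> Ix (Xv f)" unfolding Ix_def I_set_def Xv_def using f'(1) Om_def by auto
      qed
      show "\<And>i. i \<in> Ix (Xv f) - (\<lambda>y. y v) ` ?T \<Longrightarrow> 0 \<le> \<phi> i"
        unfolding \<phi>_def by (intro mult_nonneg_nonneg prod_nonneg) (use lam_pos lam2_nn in \<open>auto intro: less_imp_le\<close>)
    qed
    also have "\<dots> = Wv (psi f)" unfolding Wv_def Xpsi \<phi>_def
      by (rule sum.cong[OF refl]) (simp add: psi_app)
    finally show "(\<Sum>y\<in>?T. wr y) \<le> Wv (psi f)" .
  qed
  have Wv_pos: "f \<in> Om \<Longrightarrow> Wv (psi f) > 0" for f using Qd[of f] by linarith
  have lamN_pos: "lamN y > 0" for y unfolding lamN_def using lam_pos by (simp add: prod_pos)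
  have stepD': "(h (insert v N) - h N) + (\<Sum>f\<in>Om. pp f * ln (wv v f)) \<le> (\<Sum>f\<in>Om. pp f * ln (Wv (psi f)))"
  proof -
    have "(\<Sum>f\<in>Om. pp f * ln (fp.P psi (psi f) * wr (g f) / fp.P g (g f)))
        = (\<Sum>f\<in>Om. pp f * ln (fp.P psi (psi f))) + (\<Sum>f\<in>Om. pp f * ln (wv v f)) - (\<Sum>f\<in>Om. pp f * ln (fp.P g (g f)))"
    proof -
      have "pp f * ln (fp.P psi (psi f) * wr (g f) / fp.P g (g f))
         = pp f * ln (fp.P psi (psi f)) + pp f * ln (wv v f) - pp f * ln (fp.P g (g f))" if f: "f \<in> Om" for f
      proof -
        have a: "fp.P psi (psi f) > 0" "fp.P g (g f) > 0" "wv v f > 0"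
          using fp.P_pos[OF f, of psi] fp.P_pos[OF f, of g] wv_pos[OF f v] by auto
        have "ln (fp.P psi (psi f) * wr (g f) / fp.P g (g f)) = ln (fp.P psi (psi f)) + ln (wv v f) - ln (fp.P g (g f))"
          using a by (simp add: wr_g ln_divide_pos ln_mult)
        then show ?thesis by (simp only: right_diff_distrib distrib_left)
      qed
      then show ?thesis by (simp add: sum.distrib sum_subtractf cong: sum.cong)
    qed
    moreover have "(\<Sum>f\<in>Om. pp f * ln (\<Sum>y\<in>g ` {f'\<in>Om. psi f' = psi f}. wr y))
        \<le> (\<Sum>f\<in>Om. pp f * ln (Wv (psi f)))"
    proof (rule sum_mono)
      fix f assume f: "f \<in> Om"
      have "ln (\<Sum>y\<in>g ` {f'\<in>Om. psi f' = psi f}. wr y) \<le> ln (Wv (psi f))"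
        using Qd[OF f] by (subst ln_le_cancel_iff) auto
      then show "pp f * ln (\<Sum>y\<in>g ` {f'\<in>Om. psi f' = psi f}. wr y) \<le> pp f * ln (Wv (psi f))"
        by (rule mult_left_mono) (use pp_pos[OF f] in simp)
    qed
    moreover have "h N = - (\<Sum>f\<in>Om. pp f * ln (fp.P psi (psi f)))"
      unfolding h_def fp.H_def psi_def ..
    moreover have "h (insert v N) = - (\<Sum>f\<in>Om. pp f * ln (fp.P g (g f)))"
      unfolding h_def fp.H_def g_def ..
    ultimately show ?thesis using stepD by linarith
  qed
  have qE_pos: "f \<in> Om \<Longrightarrow> qE (psi f) > 0" for f
    unfolding qE_def using lamN_pos Wv_pos by simp
  have stepE: "(\<Sum>f\<in>Om. pp f * ln (fp.P Xv (Xv f) * qE (psi f) / fp.P psi (psi f)))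
     \<le> (\<Sum>f\<in>Om. pp f * ln (\<Sum>y\<in>psi ` {f'\<in>Om. Xv f' = Xv f}. qE y))"
  proof (rule fp.cond_gibbs)
    show "\<And>w w'. w \<in> Om \<Longrightarrow> w' \<in> Om \<Longrightarrow> psi w = psi w' \<Longrightarrow> Xv w = Xv w'"
      using XlocV unfolding psi_def by (auto simp: restrict_eq_iff)
    show "\<And>w. w \<in> Om \<Longrightarrow> 0 < qE (psi w)" by (rule qE_pos)
  qed
  have QE: "(\<Sum>y\<in>psi ` {f'\<in>Om. Xv f' = x}. qE y) = Zx v x" for x
  proof -
    have Ps: "Psi_set lam lam2 S F (X v) v x = psi ` {f'\<in>Om. Xv f' = x}"
      unfolding Psi_set_def psi_def N_def Om_def Xv_def by auto
    show ?thesis unfolding Zx_def Zfun_def Ps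
    proof (rule sum.cong[OF refl])
      fix y assume "y \<in> psi ` {f'\<in>Om. Xv f' = x}"
      then have "Xv y = x" using Xpsi by auto
      then show "qE y = (\<Prod>u\<in>nbrs v. lam (y u)) *
          (\<Sum>i\<in>I_set lam lam2 S F (X v) v x. lam i * (\<Prod>u\<in>nbrs v. lam2 i (y u))) ^ (2 * CARD('d))"
        unfolding qE_def lamN_def Wv_def Ix_def N_def Xv_def by simp
    qed
  qed
  have Zx_pos: "\<forall>x\<in>X v ` Om. Zx v x > 0"
  proof
    fix x assume "x \<in> X v ` Om"
    then obtain f where f: "f \<in> Om" "x = Xv f" unfolding Xv_def by auto
    have "0 < (\<Sum>y\<in>psi ` {f'\<in>Om. Xv f' = x}. qE y)"
      by (rule sum_pos2[where i="psi f"]) (use f finOm qE_pos in \<open>auto intro: less_imp_le\<close>)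
    then show "Zx v x > 0" using QE by simp
  qed
  have stepE': "(\<Sum>f\<in>Om. pp f * (ln (qE (psi f)) - ln (fp.P psi (psi f))))
      \<le> (\<Sum>f\<in>Om. pp f * (ln (Zx v (Xv f)) - ln (fp.P Xv (Xv f))))"
  proof -
    have "pp f * ln (fp.P Xv (Xv f) * qE (psi f) / fp.P psi (psi f))
        = pp f * (ln (qE (psi f)) - ln (fp.P psi (psi f))) + pp f * ln (fp.P Xv (Xv f))" if f: "f \<in> Om" for f
    proof -
      have a: "fp.P psi (psi f) > 0" "fp.P Xv (Xv f) > 0" "qE (psi f) > 0"
        using fp.P_pos[OF f, of psi] fp.P_pos[OF f, of Xv] qE_pos[OF f] by auto
      have "ln (fp.P Xv (Xv f) * qE (psi f) / fp.P psi (psi f)) = ln (fp.P Xv (Xv f)) + ln (qE (psi f)) - ln (fp.P psi (psi f))"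
        using a by (simp add: ln_divide_pos ln_mult)
      then show ?thesis by (simp only: right_diff_distrib distrib_left add.commute)
    qed
    then have "(\<Sum>f\<in>Om. pp f * ln (fp.P Xv (Xv f) * qE (psi f) / fp.P psi (psi f)))
       = (\<Sum>f\<in>Om. pp f * (ln (qE (psi f)) - ln (fp.P psi (psi f)))) + (\<Sum>f\<in>Om. pp f * ln (fp.P Xv (Xv f)))"
      by (simp add: sum.distrib cong: sum.cong)
    moreover have "(\<Sum>f\<in>Om. pp f * ln (\<Sum>y\<in>psi ` {f'\<in>Om. Xv f' = Xv f}. qE y))
        = (\<Sum>f\<in>Om. pp f * ln (Zx v (Xv f)))" by (simp add: QE)
    moreover have "(\<Sum>f\<in>Om. pp f * (ln (Zx v (Xv f)) - ln (fp.P Xv (Xv f))))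
       = (\<Sum>f\<in>Om. pp f * ln (Zx v (Xv f))) - (\<Sum>f\<in>Om. pp f * ln (fp.P Xv (Xv f)))"
      by (simp add: right_diff_distrib sum_subtractf)
    ultimately show ?thesis using stepE by linarith
  qed
  have mfN: "mf N = (\<Sum>f\<in>Om. pp f * ln (lamN (psi f)))"
    unfolding mf_def
  proof (rule sum.cong[OF refl])
    fix f
    have "ln (lamN (psi f)) = (\<Sum>u\<in>N. ln (lam (psi f u)))"
      unfolding lamN_def by (rule ln_prod) (use lam_pos N_def in \<open>metis finite_nbrs less_irrefl\<close>)+
    also have "\<dots> = (\<Sum>u\<in>N. ln (lam (f u)))" by (simp add: psi_app)
    finally show "pp f * (\<Sum>u\<in>N. ln (lam (f u))) = pp f * ln (lamN (psi f))" by simp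
  qed
  have hN: "h N = - (\<Sum>f\<in>Om. pp f * ln (fp.P psi (psi f)))"
    unfolding h_def fp.H_def psi_def ..
  have lnqE: "f \<in> Om \<Longrightarrow> ln (qE (psi f)) = ln (lamN (psi f)) + DD * ln (Wv (psi f))" for f
    unfolding qE_def DD_def using lamN_pos[of "psi f"] Wv_pos[of f]
    by (simp add: ln_mult ln_realpow)
  have "hp N + DD * (\<Sum>f\<in>Om. pp f * ln (Wv (psi f)))
      = (\<Sum>f\<in>Om. pp f * (ln (qE (psi f)) - ln (fp.P psi (psi f))))"
  proof -
    have "(\<Sum>f\<in>Om. pp f * (ln (qE (psi f)) - ln (fp.P psi (psi f))))
        = (\<Sum>f\<in>Om. pp f * ln (lamN (psi f)) + DD * (pp f * ln (Wv (psi f))) - pp f * ln (fp.P psi (psi f)))"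
      by (rule sum.cong[OF refl]) (simp add: lnqE algebra_simps)
    also have "\<dots> = mf N + DD * (\<Sum>f\<in>Om. pp f * ln (Wv (psi f))) + h N"
      unfolding mfN hN by (simp add: sum_subtractf sum.distrib sum_distrib_left)
    finally show ?thesis unfolding hp_def by simp
  qed
  then have key: "hp N + DD * (\<Sum>f\<in>Om. pp f * ln (Wv (psi f)))
      \<le> (\<Sum>x\<in>X v ` Om. fp.P (X v) x * (ln (Zx v x) - ln (fp.P (X v) x)))"
    using stepE' fp.E_fun[of "\<lambda>x. ln (Zx v x) - ln (fp.P Xv x)" Xv] unfolding Xv_def by simp
  have "(1 / DD) * hp N + (\<Sum>f\<in>Om. pp f * ln (Wv (psi f)))
      = (1 / DD) * (hp N + DD * (\<Sum>f\<in>Om. pp f * ln (Wv (psi f))))"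
    using DD_pos by (simp add: algebra_simps)
  also have "\<dots> \<le> (1 / DD) * (\<Sum>x\<in>X v ` Om. fp.P (X v) x * (ln (Zx v x) - ln (fp.P (X v) x)))"
    using key DD_pos by (intro mult_left_mono) auto
  finally show ?thesis using stepD' Zx_pos unfolding N_def by linarith
qed

end



context sys begin

definition "Rv v = (1 / DD) * (\<Sum>x\<in>X v ` Om. fp.P (X v) x * (ln (Zx v x) - ln (fp.P (X v) x)))"

lemma ln_Z_bound:
  "ln Z \<le> (\<Sum>v\<in>Od. Rv v) + (\<Sum>u\<in>Bd. (bnd u / DD) * ln (lam_set lam (Su u)))"
proof -
  define Ev' where "Ev' v = (\<Sum>f\<in>Om. pp f * ln (wv v f))" for v
  have 1: "ln Z = h S + (\<Sum>f\<in>Om. pp f * ln (W f))" using h_S by simp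
  have 2: "(\<Sum>f\<in>Om. pp f * ln (W f)) = mf Ev + (\<Sum>v\<in>Od. Ev' v)" unfolding Ev'_def by (rule Eln_W)
  have 3: "h S \<le> h Ev + (\<Sum>v\<in>Od. h (insert v (nbrs v)) - h (nbrs v))" by (rule chain_app)
  have 4: "hp Ev \<le> (\<Sum>v\<in>Od. (1 / DD) * hp (nbrs v)) + (\<Sum>u\<in>Bd. (bnd u / DD) * hp {u})"
    by (rule shearer_app)
  have 5: "(\<Sum>v\<in>Od. (1 / DD) * hp (nbrs v) + (h (insert v (nbrs v)) - h (nbrs v)) + Ev' v) \<le> (\<Sum>v\<in>Od. Rv v)"
  proof (rule sum_mono)
    fix v assume v: "v \<in> Od"
    show "(1 / DD) * hp (nbrs v) + (h (insert v (nbrs v)) - h (nbrs v)) + Ev' v \<le> Rv v"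
      using conjunct1[OF per_v[OF v]] unfolding Ev'_def Rv_def .
  qed
  have f5b: "(\<Sum>v\<in>Od. (1 / DD) * hp (nbrs v) + (h (insert v (nbrs v)) - h (nbrs v)) + Ev' v)
     = (\<Sum>v\<in>Od. (1 / DD) * hp (nbrs v)) + (\<Sum>v\<in>Od. h (insert v (nbrs v)) - h (nbrs v)) + (\<Sum>v\<in>Od. Ev' v)"
    by (simp add: sum.distrib)
  have 6: "(\<Sum>u\<in>Bd. (bnd u / DD) * hp {u}) \<le> (\<Sum>u\<in>Bd. (bnd u / DD) * ln (lam_set lam (Su u)))"
  proof (rule sum_mono)
    fix u assume u: "u \<in> Bd"
    show "(bnd u / DD) * hp {u} \<le> (bnd u / DD) * ln (lam_set lam (Su u))"
      by (rule mult_left_mono[OF boundary[OF u]]) (use bnd_nn DD_pos in simp)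
  qed
  show ?thesis using 1 2 3 4 5 f5b 6 unfolding hp_def by linarith
qed

lemma final:
  "Z \<le> (\<Prod>v\<in>{v\<in>S. odd_vertex v}.
       \<Prod>x\<in>supp_X lam lam2 S F (X v).
         (Zfun lam lam2 v (Psi_set lam lam2 S F (X v) v x) (I_set lam lam2 S F (X v) v x)
            / prob_X lam lam2 S F (X v) x)
         powr (prob_X lam lam2 S F (X v) x / (2 * real CARD('d))))
    * (\<Prod>u\<in>inner_boundary S.
         lam_set lam (Su u) powr (real (card (incident_edges u \<inter> edge_boundary S)) / (2 * real CARD('d))))"
proof -
  have finBd: "finite Bd" using finS unfolding inner_boundary_def by auto
  define A where "A = (\<Prod>v\<in>Od. \<Prod>x\<in>X v ` Om. (Zx v x / fp.P (X v) x) powr (fp.P (X v) x / DD))"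
  define B where "B = (\<Prod>u\<in>Bd. lam_set lam (Su u) powr (bnd u / DD))"
  have rhs: "(\<Prod>v\<in>{v\<in>S. odd_vertex v}.
       \<Prod>x\<in>supp_X lam lam2 S F (X v).
         (Zfun lam lam2 v (Psi_set lam lam2 S F (X v) v x) (I_set lam lam2 S F (X v) v x)
            / prob_X lam lam2 S F (X v) x)
         powr (prob_X lam lam2 S F (X v) x / (2 * real CARD('d))))
    * (\<Prod>u\<in>inner_boundary S.
         lam_set lam (Su u) powr (real (card (incident_edges u \<inter> edge_boundary S)) / (2 * real CARD('d))))
    = A * B"
    unfolding A_def B_def Zx_def[symmetric] prob_eq supp_eq Od_def[symmetric] DD_def[symmetric]
      bnd_def[symmetric] ..
  have base_pos: "Zx v x / fp.P (X v) x > 0" if "v \<in> Od" "x \<in> X v ` Om" for v x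
  proof -
    have "Zx v x > 0" using conjunct2[OF per_v[OF that(1)]] that(2) by blast
    moreover have "fp.P (X v) x > 0" using fp.P_pos'[OF that(2)] .
    ultimately show ?thesis by simp
  qed
  have lnA: "ln A = (\<Sum>v\<in>Od. Rv v)" and Apos: "A > 0"
  proof -
    have inner: "ln (\<Prod>x\<in>X v ` Om. (Zx v x / fp.P (X v) x) powr (fp.P (X v) x / DD)) = Rv v"
      and ipos: "(\<Prod>x\<in>X v ` Om. (Zx v x / fp.P (X v) x) powr (fp.P (X v) x / DD)) > 0"
      if v: "v \<in> Od" for v
    proof -
      have fin: "finite (X v ` Om)" using finOm by auto
      show "(\<Prod>x\<in>X v ` Om. (Zx v x / fp.P (X v) x) powr (fp.P (X v) x / DD)) > 0"
      proof (rule prod_pos)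
        fix x assume "x \<in> X v ` Om"
        then have "Zx v x / fp.P (X v) x > 0" by (rule base_pos[OF v])
        then show "(Zx v x / fp.P (X v) x) powr (fp.P (X v) x / DD) > 0" by (metis less_irrefl powr_gt_zero)
      qed
      have "ln (\<Prod>x\<in>X v ` Om. (Zx v x / fp.P (X v) x) powr (fp.P (X v) x / DD))
          = (\<Sum>x\<in>X v ` Om. ln ((Zx v x / fp.P (X v) x) powr (fp.P (X v) x / DD)))"
      proof (rule ln_prod[OF fin])
        fix x assume "x \<in> X v ` Om"
        then have "Zx v x / fp.P (X v) x > 0" by (rule base_pos[OF v])
        then show "(Zx v x / fp.P (X v) x) powr (fp.P (X v) x / DD) \<noteq> 0" by (metis less_irrefl powr_eq_0_iff)
      qed
      also have "\<dots> = (\<Sum>x\<in>X v ` Om. (1 / DD) * (fp.P (X v) x * (ln (Zx v x) - ln (fp.P (X v) x))))"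
      proof (rule sum.cong[OF refl])
        fix x assume x: "x \<in> X v ` Om"
        have "Zx v x > 0" using conjunct2[OF per_v[OF v]] x by blast
        moreover have "fp.P (X v) x > 0" using fp.P_pos'[OF x] .
        ultimately show "ln ((Zx v x / fp.P (X v) x) powr (fp.P (X v) x / DD))
            = (1 / DD) * (fp.P (X v) x * (ln (Zx v x) - ln (fp.P (X v) x)))"
          by (simp add: ln_powr ln_divide_pos)
      qed
      also have "\<dots> = Rv v" unfolding Rv_def by (simp add: sum_distrib_left)
      finally show "ln (\<Prod>x\<in>X v ` Om. (Zx v x / fp.P (X v) x) powr (fp.P (X v) x / DD)) = Rv v" .
    qed
    show "A > 0" unfolding A_def by (rule prod_pos) (rule ipos)
    have "ln A = (\<Sum>v\<in>Od. ln (\<Prod>x\<in>X v ` Om. (Zx v x / fp.P (X v) x) powr (fp.P (X v) x / DD)))"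
      unfolding A_def
    proof (rule ln_prod[OF finOd])
      fix v assume "v \<in> Od"
      from ipos[OF this] show "(\<Prod>x\<in>X v ` Om. (Zx v x / fp.P (X v) x) powr (fp.P (X v) x / DD)) \<noteq> 0"
        by linarith
    qed
    also have "\<dots> = (\<Sum>v\<in>Od. Rv v)" using inner by simp
    finally show "ln A = (\<Sum>v\<in>Od. Rv v)" .
  qed
  have lnB: "ln B = (\<Sum>u\<in>Bd. (bnd u / DD) * ln (lam_set lam (Su u)))" and Bpos: "B > 0"
  proof -
    show "B > 0" unfolding B_def
    proof (rule prod_pos)
      fix u assume "u \<in> Bd"
      then have "lam_set lam (Su u) > 0" by (rule lam_set_pos)
      then show "lam_set lam (Su u) powr (bnd u / DD) > 0" by (metis less_irrefl powr_gt_zero)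
    qed
    have "ln B = (\<Sum>u\<in>Bd. ln (lam_set lam (Su u) powr (bnd u / DD)))"
      unfolding B_def
    proof (rule ln_prod[OF finBd])
      fix u assume "u \<in> Bd"
      then have "lam_set lam (Su u) > 0" by (rule lam_set_pos)
      then show "lam_set lam (Su u) powr (bnd u / DD) \<noteq> 0" by simp
    qed
    also have "\<dots> = (\<Sum>u\<in>Bd. (bnd u / DD) * ln (lam_set lam (Su u)))"
      by (simp add: ln_powr)
    finally show "ln B = (\<Sum>u\<in>Bd. (bnd u / DD) * ln (lam_set lam (Su u)))" .
  qed
  have "ln Z \<le> ln (A * B)" using ln_Z_bound lnA lnB Apos Bpos by (simp add: ln_mult)
  then have "Z \<le> A * B" using Zpos Apos Bpos by (subst (asm) ln_le_cancel_iff) auto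
  then show ?thesis unfolding rhs .
qed

end

theorem lemma7p3:
  fixes lam :: "'s::finite \<Rightarrow> real" and lam2 :: "'s \<Rightarrow> 's \<Rightarrow> real"
    and S :: "'d::finite vertex set"
    and Su :: "'d vertex \<Rightarrow> 's set"
    and F :: "('d vertex \<Rightarrow> 's) set"
    and X :: "'d vertex \<Rightarrow> ('d vertex \<Rightarrow> 's) \<Rightarrow> 'x"
  assumes "spin_system lam lam2"
    and "finite S" and "even_set S"
    and "F \<subseteq> S \<rightarrow>\<^sub>E (UNIV :: 's set)"
    and "\<forall>f\<in>F. \<forall>u\<in>inner_boundary S. f u \<in> Su u"
    and "\<forall>v\<in>S. odd_vertex v \<longrightarrow>
           (\<forall>f g. (\<forall>u\<in>nbrs v. f u = g u) \<longrightarrow> X v f = X v g)"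
  shows "total_weight lam lam2 S F \<le>
    (\<Prod>v\<in>{v\<in>S. odd_vertex v}.
       \<Prod>x\<in>supp_X lam lam2 S F (X v).
         (Zfun lam lam2 v (Psi_set lam lam2 S F (X v) v x) (I_set lam lam2 S F (X v) v x)
            / prob_X lam lam2 S F (X v) x)
         powr (prob_X lam lam2 S F (X v) x / (2 * real CARD('d))))
    * (\<Prod>u\<in>inner_boundary S.
         lam_set lam (Su u) powr (real (card (incident_edges u \<inter> edge_boundary S)) / (2 * real CARD('d))))"
proof (cases "total_weight lam lam2 S F > 0")
  case True
  interpret sys lam lam2 S Su F X
    using assms True by unfold_locales auto
  show ?thesis by (rule final)
next
  case False
  have "0 \<le> (\<Prod>v\<in>{v\<in>S. odd_vertex v}.
       \<Prod>x\<in>supp_X lam lam2 S F (X v).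
         (Zfun lam lam2 v (Psi_set lam lam2 S F (X v) v x) (I_set lam lam2 S F (X v) v x)
            / prob_X lam lam2 S F (X v) x)
         powr (prob_X lam lam2 S F (X v) x / (2 * real CARD('d))))
    * (\<Prod>u\<in>inner_boundary S.
         lam_set lam (Su u) powr (real (card (incident_edges u \<inter> edge_boundary S)) / (2 * real CARD('d))))"
    by (intro mult_nonneg_nonneg prod_nonneg) simp_all
  then show ?thesis using False by linarith
qed


end
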